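(* Let $n$ be even and $F\colon\mathbb F_2^n\to\mathbb F_2^m$ be quadratic. If $W\le\mathbb F_2^m$ is a subspace of dimension at least $\frac n2+1$, then $|W\cap N_F|$ is odd.
   Context: $\langle\cdot,\cdot\rangle$ denotes standard dot products. Component functions: $F_b(x)=\langle b,F(x)\rangle$ for $b\in\mathbb F_2^m$. $F$ is quadratic if every component is a quadratic form plus an affine function over $\mathbb F_2$. $W_F(b,a)=\sum_{x\in\mathbb F_2^n}(-1)^{F_b(x)+\langle x,a\rangle}$. $F_b$ is bent if $|W_F(b,a)|=2^{n/2}$ for all $a\in\mathbb F_2^n$. $N_F=\{b\in\mathbb F_2^m\setminus\{0\}\colon F_b\text{ is not bent}\}$. *)

theory Defs
  imports "HOL-Analysis.Analysis" "HOL-Library.Z2"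
begin

text \<open>Vectors of F_2^n are modelled as bit ^ 'n with 'n a finite index type, n = CARD('n).\<close>

definition dotp :: "bit ^ 'n \<Rightarrow> bit ^ 'n \<Rightarrow> bit" where
  "dotp x y = (\<Sum>i\<in>UNIV. x $ i * y $ i)"

definition sgnbit :: "bit \<Rightarrow> int" where
  "sgnbit v = (if v = 0 then 1 else -1)"

definition component :: "(bit ^ 'n \<Rightarrow> bit ^ 'm) \<Rightarrow> bit ^ 'm \<Rightarrow> bit ^ 'n \<Rightarrow> bit" where
  "component F b x = dotp b (F x)"

definition quadratic_plus_affine :: "(bit ^ 'n \<Rightarrow> bit) \<Rightarrow> bool" where
  "quadratic_plus_affine f \<longleftrightarrow>
     (\<exists>(Q :: 'n \<Rightarrow> 'n \<Rightarrow> bit) (l :: bit ^ 'n) (c :: bit).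
        \<forall>x. f x = (\<Sum>i\<in>UNIV. \<Sum>j\<in>UNIV. Q i j * x $ i * x $ j) + dotp l x + c)"

definition quadratic_fun :: "(bit ^ 'n \<Rightarrow> bit ^ 'm) \<Rightarrow> bool" where
  "quadratic_fun F \<longleftrightarrow> (\<forall>b. quadratic_plus_affine (component F b))"

definition walsh :: "(bit ^ 'n \<Rightarrow> bit ^ 'm) \<Rightarrow> bit ^ 'm \<Rightarrow> bit ^ 'n \<Rightarrow> int" where
  "walsh F b a = (\<Sum>x\<in>UNIV. sgnbit (component F b x + dotp x a))"

text \<open>n is assumed even in the theorem, so 2^(n/2) = 2^(n div 2).\<close>
definition bent_component :: "(bit ^ 'n \<Rightarrow> bit ^ 'm) \<Rightarrow> bit ^ 'm \<Rightarrow> bool" where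
  "bent_component F b \<longleftrightarrow> (\<forall>a. \<bar>walsh F b a\<bar> = 2 ^ (CARD('n) div 2))"

definition nonbent_set :: "(bit ^ 'n \<Rightarrow> bit ^ 'm) \<Rightarrow> (bit ^ 'm) set" where
  "nonbent_set F = {b. b \<noteq> 0 \<and> \<not> bent_component F b}"

end

theory Submission
  imports Defs
begin
lemma UNIV_bit: "(UNIV::bit set) = {0,1}" by (auto intro: bit.exhaust)
instance bit :: finite by standard (simp add: UNIV_bit)
declare add_bit_eq_xor[simp del] mult_bit_eq_and[simp del]

lemma bit_add_self[simp]: "(x::bit) + x = 0" by (cases x) simp_all
lemma vec_add_self[simp]: "(x::bit^'n) + x = 0" by (simp add: vec_eq_iff)
lemma vec_add_cancel: "(x::bit^'n) + y + y = x" by (simp add: add.assoc)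

lemma dotp_comm: "dotp x y = dotp y x" unfolding dotp_def by (simp add: mult.commute)
lemma dotp_add_left: "dotp (x + y) z = dotp x z + dotp y z"
  unfolding dotp_def by (simp add: distrib_right sum.distrib)
lemma dotp_add_right: "dotp z (x + y) = dotp z x + dotp z y"
  unfolding dotp_def by (simp add: distrib_left sum.distrib)
lemma dotp_zero_left[simp]: "dotp 0 y = 0" unfolding dotp_def by simp
lemma dotp_zero_right[simp]: "dotp y 0 = 0" unfolding dotp_def by simp
lemma dotp_axis_left: "dotp (axis i 1) y = y $ i"
proof -
  have "(\<lambda>j. axis i 1 $ j * y $ j) = (\<lambda>j. if j = i then y $ j else 0)"
    by (auto simp: axis_def)
  then show ?thesis unfolding dotp_def by (simp only:) simp
qed

lemma sgnbit_add: "sgnbit (u + v) = sgnbit u * sgnbit v"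
  by (cases u; cases v) (simp_all add: sgnbit_def)
lemma sgnbit_1: "sgnbit (u + 1) = - sgnbit u"
  by (cases u) (simp_all add: sgnbit_def)
lemma sgnbit_sq: "sgnbit u * sgnbit u = 1"
  by (cases u) (simp_all add: sgnbit_def)

lemma sum_shift: "(\<Sum>x\<in>UNIV. f (x + c)) = (\<Sum>x\<in>UNIV. f (x::bit^'n))"
  by (rule sum.reindex_bij_witness[of _ "\<lambda>x. x + c" "\<lambda>x. x + c"]) (auto simp: vec_add_cancel)

lemma card_bit[simp]: "CARD(bit) = 2" by (simp add: UNIV_bit)
lemma card_bitvec: "CARD(bit^'n) = 2 ^ CARD('n)"
  by simp

lemma char_orth:
  "(\<Sum>a\<in>UNIV. sgnbit (dotp a v)) = (if v = 0 then 2 ^ CARD('n) else (0::int))"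
  for v :: "bit^'n"
proof (cases "v = 0")
  case True
  then show ?thesis by (simp add: sgnbit_def card_bitvec del: CARD_vec)
next
  case False
  then obtain i where i: "v $ i = 1" by (metis bit_not_zero_iff vec_eq_iff zero_index)
  let ?S = "\<Sum>a\<in>UNIV. sgnbit (dotp a v)"
  have "?S = (\<Sum>a\<in>UNIV. sgnbit (dotp (a + axis i 1) v))"
    by (rule sum_shift[symmetric])
  also have "\<dots> = (\<Sum>a\<in>UNIV. - sgnbit (dotp a v))"
    by (simp add: dotp_add_left dotp_axis_left i sgnbit_1)
  also have "\<dots> = - ?S" by (simp add: sum_negf)
  finally have "?S = 0" by simp
  with False show ?thesis by simp
qed

lemma invol_sum_zero:
  assumes "finite A" "\<And>x. x \<in> A \<Longrightarrow> g x \<in> A" "\<And>x. x \<in> A \<Longrightarrow> g (g x) = x"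
    "\<And>x. x \<in> A \<Longrightarrow> g x \<noteq> x" "\<And>x. x \<in> A \<Longrightarrow> h (g x) = h x"
  shows "(\<Sum>x\<in>A. h x) = (0::bit)"
  using assms
proof (induction "card A" arbitrary: A rule: less_induct)
  case less
  show ?case
  proof (cases "A = {}")
    case True then show ?thesis by simp
  next
    case False
    then obtain a where a: "a \<in> A" by blast
    let ?A' = "A - {a, g a}"
    have ga: "g a \<in> A" "g a \<noteq> a" using less a by auto
    have fin: "finite ?A'" using less by simp
    have c2: "card {a, g a} = 2" using ga by simp
    have "card A > 0" using less(2) a by (auto simp: card_gt_0_iff)
    then have lt: "card ?A' < card A" using less a ga c2 by (simp add: card_Diff_subset)
    have "(\<Sum>x\<in>?A'. h x) = 0"
    proof (rule less(1)[OF lt])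
      fix x assume x: "x \<in> ?A'"
      have xA: "x \<in> A" "x \<noteq> a" "x \<noteq> g a" using x by auto
      have "g x \<noteq> a" using less(4)[OF xA(1)] xA(3) by auto
      moreover have "g x \<noteq> g a" using less(4)[OF xA(1)] less(4)[OF a] xA(2) by metis
      ultimately show "g x \<in> ?A'" using less(3)[OF xA(1)] by auto
    qed (use less in auto)
    moreover have "(\<Sum>x\<in>A. h x) = h a + h (g a) + (\<Sum>x\<in>?A'. h x)"
    proof -
      have "A = insert a (insert (g a) ?A')" using a ga by auto
      then have "(\<Sum>x\<in>A. h x) = (\<Sum>x\<in>insert a (insert (g a) ?A'). h x)" by simp
      also have "\<dots> = h a + (h (g a) + (\<Sum>x\<in>?A'. h x))"
        using fin ga by (simp add: sum.insert)
      finally show ?thesis by (simp add: add.assoc)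
    qed
    ultimately show ?thesis using less(6)[OF a] by simp
  qed
qed

lemma invol_card_image:
  assumes "finite A" "\<And>x. x \<in> A \<Longrightarrow> g x \<in> A" "\<And>x. x \<in> A \<Longrightarrow> g (g x) = x"
    "\<And>x. x \<in> A \<Longrightarrow> g x \<noteq> x" "\<And>x. x \<in> A \<Longrightarrow> h (g x) = h x"
  shows "2 * card (h ` A) \<le> card A"
  using assms
proof (induction "card A" arbitrary: A rule: less_induct)
  case less
  show ?case
  proof (cases "A = {}")
    case True then show ?thesis by simp
  next
    case False
    then obtain a where a: "a \<in> A" by blast
    let ?A' = "A - {a, g a}"
    have ga: "g a \<in> A" "g a \<noteq> a" using less a by auto
    have fin: "finite ?A'" using less by simp
    have c2: "card {a, g a} = 2" using ga by simp
    have "card ?A' = card A - 2" using less a ga c2 by (simp add: card_Diff_subset)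
    moreover have "card {a, g a} \<le> card A" using less a ga by (intro card_mono) auto
    ultimately have cA: "card A = card ?A' + 2" using c2 by linarith
    have lt: "card ?A' < card A" using cA by simp
    have IH: "2 * card (h ` ?A') \<le> card ?A'"
    proof (rule less(1)[OF lt])
      fix x assume x: "x \<in> ?A'"
      have xA: "x \<in> A" "x \<noteq> a" "x \<noteq> g a" using x by auto
      have "g x \<noteq> a" using less(4)[OF xA(1)] xA(3) by auto
      moreover have "g x \<noteq> g a" using less(4)[OF xA(1)] less(4)[OF a] xA(2) by metis
      ultimately show "g x \<in> ?A'" using less(3)[OF xA(1)] by auto
    qed (use less in auto)
    have "h ` A \<subseteq> insert (h a) (h ` ?A')" using less(6)[OF a] by auto
    then have "card (h ` A) \<le> card (insert (h a) (h ` ?A'))"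
      by (intro card_mono) (use fin in auto)
    also have "\<dots> \<le> card (h ` ?A') + 1" using fin by (simp add: card_insert_if)
    finally have "card (h ` A) \<le> card (h ` ?A') + 1" .
    then show ?thesis using cA IH by linarith
  qed
qed

lemma invol_sum_fix:
  assumes "finite A" "\<And>x. x \<in> A \<Longrightarrow> g x \<in> A" "\<And>x. x \<in> A \<Longrightarrow> g (g x) = x"
    "\<And>x. x \<in> A \<Longrightarrow> h (g x) = h x"
  shows "(\<Sum>x\<in>A. h x) = (\<Sum>x\<in>{x\<in>A. g x = x}. h x :: bit)"
proof -
  have "(\<Sum>x\<in>A. h x) = (\<Sum>x\<in>A \<inter> {x. g x = x}. h x) + (\<Sum>x\<in>A - {x. g x = x}. h x)"
    using assms(1) by (rule sum.Int_Diff)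
  moreover have "A \<inter> {x. g x = x} = {x\<in>A. g x = x}" "A - {x. g x = x} = {x\<in>A. g x \<noteq> x}" by auto
  moreover have "(\<Sum>x\<in>{x\<in>A. g x \<noteq> x}. h x) = 0"
  proof (rule invol_sum_zero)
    fix x assume "x \<in> {x\<in>A. g x \<noteq> x}"
    then have x: "x \<in> A" "g x \<noteq> x" by auto
    show "g x \<in> {x\<in>A. g x \<noteq> x}" using assms(2,3)[OF x(1)] x(2) by auto
  qed (use assms in auto)
  ultimately show ?thesis by simp
qed

definition polar :: "(bit^'n \<Rightarrow> bit) \<Rightarrow> bit^'n^'n" where
  "polar f = (\<chi> i j. f (axis i 1 + axis j 1) + f (axis i 1) + f (axis j 1) + f 0)"

lemma bit_cancel6: "(A+B+P+X+Z+c) + (A+X+c) + (B+Z+c) + c = (P::bit)"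
  by (cases A; cases B; cases P; cases X; cases Z; cases c) simp_all

lemma sum_axis_right: "(\<Sum>l\<in>UNIV. g l * axis j 1 $ l) = (g j :: 'a::comm_ring_1)"
proof -
  have "(\<lambda>l. g l * axis j 1 $ l) = (\<lambda>l. if l = j then g l else 0)"
    by (auto simp: axis_def)
  then show ?thesis by (simp only:) simp
qed

lemma sum_axis2: "(\<Sum>k\<in>UNIV. \<Sum>l\<in>UNIV. Q k l * (axis i 1 $ k * axis j 1 $ l)) = (Q i j :: 'a::comm_ring_1)"
proof -
  have "(\<Sum>k\<in>UNIV. \<Sum>l\<in>UNIV. Q k l * (axis i 1 $ k * axis j 1 $ l)) = (\<Sum>k\<in>UNIV. \<Sum>l\<in>UNIV. (Q k l * axis i 1 $ k) * axis j 1 $ l)"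
    by (simp only: mult.assoc mult.commute[of "axis i 1 $ _" "axis j 1 $ _"])
  also have "\<dots> = (\<Sum>k\<in>UNIV. Q k j * axis i 1 $ k)" by (simp only: sum_axis_right)
  also have "\<dots> = Q i j" using sum_axis_right[of "\<lambda>k. Q k j"] by simp
  finally show ?thesis .
qed

lemma quad_polar:
  fixes f :: "bit^'n \<Rightarrow> bit"
  assumes "quadratic_plus_affine f"
  shows "f (x+z) + f x + f z + f 0 = dotp x (polar f *v z)"
proof -
  obtain Q l c where fQ: "\<And>x. f x = (\<Sum>i\<in>UNIV. \<Sum>j\<in>UNIV. Q i j * x $ i * x $ j) + dotp l x + c"
    using assms unfolding quadratic_plus_affine_def by blast
  define P where "P x z = (\<Sum>i\<in>UNIV. \<Sum>j\<in>UNIV. Q i j * (x $ i * z $ j) + Q i j * (z $ i * x $ j))" for x z :: "bit^'n"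
  have key: "f (x+z) + f x + f z + f 0 = P x z" for x z
  proof -
    have "\<And>i j. Q i j * (x+z)$i * (x+z)$j = (Q i j * x$i*x$j + Q i j * z$i * z$j) + (Q i j * (x$i*z$j) + Q i j * (z$i*x$j))"
      by (simp add: algebra_simps)
    then have e1: "(\<Sum>i\<in>UNIV. \<Sum>j\<in>UNIV. Q i j * (x+z) $ i * (x+z) $ j) =
       (\<Sum>i\<in>UNIV. \<Sum>j\<in>UNIV. Q i j * x $ i * x $ j) + (\<Sum>i\<in>UNIV. \<Sum>j\<in>UNIV. Q i j * z $ i * z $ j) + P x z"
      by (simp only: sum.distrib P_def)
    have f0: "f 0 = c" by (simp add: fQ)
    show ?thesis unfolding f0 unfolding fQ e1 dotp_add_right
      using bit_cancel6 by (simp add: add.assoc)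
  qed
  have polQ: "polar f $ i $ j = Q i j + Q j i" for i j
  proof -
    have "polar f $ i $ j = P (axis i 1) (axis j 1)" unfolding polar_def using key by simp
    also have "\<dots> = (\<Sum>k\<in>UNIV. \<Sum>l\<in>UNIV. Q k l * (axis i 1 $ k * axis j 1 $ l)) + (\<Sum>k\<in>UNIV. \<Sum>l\<in>UNIV. Q k l * (axis j 1 $ k * axis i 1 $ l))"
      unfolding P_def by (simp only: sum.distrib)
    also have "\<dots> = Q i j + Q j i"
      by (simp only: sum_axis2)
    finally show ?thesis .
  qed
  have "P x z = (\<Sum>i\<in>UNIV. \<Sum>j\<in>UNIV. Q i j * (x $ i * z $ j)) + (\<Sum>i\<in>UNIV. \<Sum>j\<in>UNIV. Q i j * (z $ i * x $ j))"
    unfolding P_def by (simp only: sum.distrib)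
  also have "(\<Sum>i\<in>UNIV. \<Sum>j\<in>UNIV. Q i j * (z $ i * x $ j)) = (\<Sum>i\<in>UNIV. \<Sum>j\<in>UNIV. Q j i * (z $ j * x $ i))"
    by (rule sum.swap)
  also have "(\<Sum>i\<in>UNIV. \<Sum>j\<in>UNIV. Q i j * (x $ i * z $ j)) + (\<Sum>i\<in>UNIV. \<Sum>j\<in>UNIV. Q j i * (z $ j * x $ i))
     = (\<Sum>i\<in>UNIV. \<Sum>j\<in>UNIV. Q i j * (x $ i * z $ j) + Q j i * (z $ j * x $ i))"
    by (simp only: sum.distrib)
  also have "\<dots> = (\<Sum>i\<in>UNIV. x $ i * (\<Sum>j\<in>UNIV. (Q i j + Q j i) * z $ j))"
    by (simp only: sum_distrib_left) (intro sum.cong refl; simp add: algebra_simps)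
  also have "\<dots> = dotp x (polar f *v z)"
    unfolding dotp_def matrix_vector_mult_def polQ by simp
  finally show ?thesis using key by simp
qed

lemma bit_cancel_w: "f0 + fx + fz + f1 = (B::bit) \<Longrightarrow>
   (fx + xa) + (f0 + (xa + za)) = B + (fz + f1 + za)"
  by (cases f0; cases fx; cases fz; cases f1; cases B; cases xa; cases za) simp_all

lemma walsh_sq:
  fixes f :: "bit^'n \<Rightarrow> bit" and M :: "bit^'n^'n"
  assumes bil: "\<And>x z. f (x+z) + f x + f z + f 0 = dotp x (M *v z)"
  shows "(\<Sum>x\<in>UNIV. sgnbit (f x + dotp x a))^2
       = 2^CARD('n) * (\<Sum>z\<in>{z. M *v z = 0}. sgnbit (f z + f 0 + dotp z a))"
proof -
  let ?u = "\<lambda>x. f x + dotp x a"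
  let ?g = "\<lambda>z. f z + f 0 + dotp z a"
  have "(\<Sum>x\<in>UNIV. sgnbit (?u x))^2 = (\<Sum>x\<in>UNIV. \<Sum>y\<in>UNIV. sgnbit (?u x) * sgnbit (?u y))"
    by (simp add: power2_eq_square sum_product)
  also have "\<dots> = (\<Sum>x\<in>UNIV. \<Sum>z\<in>UNIV. sgnbit (?u x) * sgnbit (?u (z + x)))"
    by (rule sum.cong[OF refl]) (rule sum_shift[symmetric])
  also have "\<dots> = (\<Sum>x\<in>UNIV. \<Sum>z\<in>UNIV. sgnbit (dotp x (M *v z)) * sgnbit (?g z))"
  proof (intro sum.cong refl)
    fix x z :: "bit^'n"
    have "?u x + ?u (z + x) = dotp x (M *v z) + ?g z"
      using bil[of x z] unfolding add.commute[of z x] dotp_add_left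
      by (rule bit_cancel_w)
    then show "sgnbit (?u x) * sgnbit (?u (z + x)) = sgnbit (dotp x (M *v z)) * sgnbit (?g z)"
      by (simp add: sgnbit_add[symmetric])
  qed
  also have "\<dots> = (\<Sum>z\<in>UNIV. (\<Sum>x\<in>UNIV. sgnbit (dotp x (M *v z))) * sgnbit (?g z))"
    by (subst sum.swap) (simp add: sum_distrib_right)
  also have "\<dots> = (\<Sum>z\<in>UNIV. if M *v z = 0 then 2^CARD('n) * sgnbit (?g z) else 0)"
    by (intro sum.cong refl) (simp add: char_orth)
  also have "\<dots> = (\<Sum>z\<in>{z. M *v z = 0}. 2^CARD('n) * sgnbit (?g z))"
    by (simp add: sum.If_cases)
  also have "\<dots> = 2^CARD('n) * (\<Sum>z\<in>{z. M *v z = 0}. sgnbit (?g z))"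
    by (simp add: sum_distrib_left)
  finally show ?thesis .
qed

lemma abs_eq_pow_iff: "(k::int) \<ge> 0 \<Longrightarrow> \<bar>w\<bar> = k \<longleftrightarrow> w^2 = k^2"
  by (metis abs_of_nonneg abs_power2 power2_abs power2_eq_iff_nonneg abs_ge_zero)

lemma bent_iff_ker:
  fixes f :: "bit^'n \<Rightarrow> bit" and M :: "bit^'n^'n"
  assumes bil: "\<And>x z. f (x+z) + f x + f z + f 0 = dotp x (M *v z)"
    and ev: "even CARD('n)"
  shows "(\<forall>a. \<bar>\<Sum>x\<in>UNIV. sgnbit (f x + dotp x a)\<bar> = 2 ^ (CARD('n) div 2))
     \<longleftrightarrow> (\<forall>z. M *v z = 0 \<longrightarrow> z = 0)"
proof -
  let ?N = "CARD('n)"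
  let ?R = "{z. M *v z = 0}"
  obtain k where k: "?N = 2*k" using ev by (auto elim: evenE)
  have pw: "(2::int)^?N = (2 ^ (?N div 2))^2"
    unfolding k by (simp add: power_mult[symmetric] mult.commute)
  have eq: "\<bar>\<Sum>x\<in>UNIV. sgnbit (f x + dotp x a)\<bar> = 2 ^ (?N div 2) \<longleftrightarrow>
      (\<Sum>z\<in>?R. sgnbit (f z + f 0 + dotp z a)) = 1" for a
  proof -
    have "\<bar>\<Sum>x\<in>UNIV. sgnbit (f x + dotp x a)\<bar> = 2 ^ (?N div 2) \<longleftrightarrow>
       (\<Sum>x\<in>UNIV. sgnbit (f x + dotp x a))^2 = 2^?N"
      by (subst abs_eq_pow_iff) (simp_all add: pw)
    also have "\<dots> \<longleftrightarrow> (\<Sum>z\<in>?R. sgnbit (f z + f 0 + dotp z a)) = 1"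
      unfolding walsh_sq[OF bil] by simp
    finally show ?thesis .
  qed
  show ?thesis
  proof
    assume H: "\<forall>a. \<bar>\<Sum>x\<in>UNIV. sgnbit (f x + dotp x a)\<bar> = 2 ^ (?N div 2)"
    show "\<forall>z. M *v z = 0 \<longrightarrow> z = 0"
    proof (intro allI impI, rule ccontr)
      fix w assume w: "M *v w = 0" "w \<noteq> 0"
      have S1: "(\<Sum>z\<in>?R. sgnbit (f z + f 0 + dotp z a)) = 1" for a using H eq by blast
      have "(\<Sum>a\<in>UNIV. sgnbit (dotp a w)) = (\<Sum>a\<in>UNIV. (\<Sum>z\<in>?R. sgnbit (f z + f 0 + dotp z a)) * sgnbit (dotp a w))"
        by (simp add: S1)
      also have "\<dots> = (\<Sum>a\<in>UNIV. \<Sum>z\<in>?R. sgnbit (f z + f 0) * sgnbit (dotp a (z + w)))"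
      proof (rule sum.cong[OF refl])
        fix a
        show "(\<Sum>z\<in>?R. sgnbit (f z + f 0 + dotp z a)) * sgnbit (dotp a w) = (\<Sum>z\<in>?R. sgnbit (f z + f 0) * sgnbit (dotp a (z + w)))"
          unfolding sum_distrib_right
        proof (rule sum.cong[OF refl])
          fix z
          show "sgnbit (f z + f 0 + dotp z a) * sgnbit (dotp a w) = sgnbit (f z + f 0) * sgnbit (dotp a (z + w))"
            by (simp add: sgnbit_add dotp_add_right dotp_comm[of z a] mult_ac)
        qed
      qed
      also have "\<dots> = (\<Sum>z\<in>?R. sgnbit (f z + f 0) * (\<Sum>a\<in>UNIV. sgnbit (dotp a (z + w))))"
        by (subst sum.swap) (simp add: sum_distrib_left)
      also have "\<dots> = (\<Sum>z\<in>?R. if z = w then sgnbit (f z + f 0) * 2^?N else 0)"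
      proof (intro sum.cong refl)
        fix z
        have "z + w = 0 \<longleftrightarrow> z = w"
          by (metis vec_add_cancel add_0)
        then show "sgnbit (f z + f 0) * (\<Sum>a\<in>UNIV. sgnbit (dotp a (z + w))) = (if z = w then sgnbit (f z + f 0) * 2^?N else 0)"
          by (simp add: char_orth)
      qed
      also have "\<dots> = sgnbit (f w + f 0) * 2^?N"
        using w(1) by (simp add: sum.delta')
      finally have "sgnbit (f w + f 0) * 2^?N = 0" using w(2) by (simp add: char_orth)
      then show False by (simp add: sgnbit_def split: if_splits)
    qed
  next
    assume K: "\<forall>z. M *v z = 0 \<longrightarrow> z = 0"
    then have "?R = {0}" by auto
    then have "(\<Sum>z\<in>?R. sgnbit (f z + f 0 + dotp z a)) = 1" for a
      by (simp add: sgnbit_def)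
    then show "\<forall>a. \<bar>\<Sum>x\<in>UNIV. sgnbit (f x + dotp x a)\<bar> = 2 ^ (?N div 2)"
      using eq by blast
  qed
qed

lemma det_ker: "det (M::bit^'n^'n) \<noteq> 0 \<longleftrightarrow> (\<forall>z. M *v z = 0 \<longrightarrow> z = 0)"
proof -
  have "det M \<noteq> 0 \<longleftrightarrow> inj ((*v) M)"
    using det_nz_iff_inj_gen[of "(*v) M"] by simp
  also have "\<dots> \<longleftrightarrow> (\<forall>z. M *v z = 0 \<longrightarrow> z = 0)"
    by (rule vec.inj_iff_eq_0)
  finally show ?thesis .
qed

lemma det_invol:
  fixes M :: "bit^'n^'n"
  assumes sym: "\<And>i j. M $ i $ j = M $ j $ i"
  shows "det M = (\<Sum>p\<in>{p. p permutes UNIV \<and> inv p = p}. \<Prod>i\<in>UNIV. M $ i $ p i)"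
proof -
  have s1: "of_int (sign p) = (1::bit)" for p :: "'n \<Rightarrow> 'n"
    by (cases p rule: sign_cases) simp_all
  have "det M = (\<Sum>p\<in>{p. p permutes UNIV}. \<Prod>i\<in>UNIV. M $ i $ p i)"
    unfolding det_def s1 by simp
  also have "\<dots> = (\<Sum>p\<in>{x\<in>{p. p permutes UNIV}. inv x = x}. \<Prod>i\<in>UNIV. M $ i $ p i)"
  proof (rule invol_sum_fix)
    fix p assume p: "p \<in> {p. p permutes (UNIV::'n set)}"
    then have pp: "p permutes UNIV" by simp
    show "inv p \<in> {p. p permutes UNIV}" using permutes_inv[OF pp] by simp
    show "inv (inv p) = p" using permutes_inv_inv[OF pp] .
    have "(\<Prod>i\<in>UNIV. M $ i $ inv p i) = (\<Prod>i\<in>UNIV. M $ p i $ inv p (p i))"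
      using prod.permute[OF pp, of "\<lambda>i. M $ i $ inv p i"] by (simp add: comp_def)
    also have "\<dots> = (\<Prod>i\<in>UNIV. M $ i $ p i)"
      using permutes_inverses(2)[OF pp] sym by simp
    finally show "(\<Prod>i\<in>UNIV. M $ i $ inv p i) = (\<Prod>i\<in>UNIV. M $ i $ p i)" .
  qed simp
  also have "{x\<in>{p. p permutes UNIV}. inv x = x} = {p. p permutes UNIV \<and> inv p = p}" by auto
  finally show ?thesis .
qed

lemma exists_orth:
  fixes W :: "(bit^'m) set" and C :: "(bit^'m) set"
  assumes W: "vec.subspace W" and card: "card C < vec.dim W"
  shows "\<exists>u\<in>W. u \<noteq> 0 \<and> (\<forall>c\<in>C. dotp u c = 0)"
proof -
  obtain B where B: "B \<subseteq> W" "vec.independent B" "W \<subseteq> vec.span B" "card B = vec.dim W"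
    using vec.basis_exists by blast
  have finB: "finite B" and finC: "finite C" by simp_all
  let ?x = "\<lambda>g. (\<Sum>v\<in>B. g v *s v)"
  define \<Phi> where "\<Phi> g = restrict (\<lambda>c. dotp (?x g) c) C" for g :: "bit^'m \<Rightarrow> bit"
  let ?A = "PiE B (\<lambda>_. UNIV :: bit set)"
  let ?T = "PiE C (\<lambda>_. UNIV :: bit set)"
  have cA: "card ?A = 2 ^ card B" using finB by (simp add: card_PiE)
  have cT: "card ?T = 2 ^ card C" using finC by (simp add: card_PiE)
  have sub: "\<Phi> ` ?A \<subseteq> ?T" unfolding \<Phi>_def by auto
  have "\<not> inj_on \<Phi> ?A"
  proof
    assume "inj_on \<Phi> ?A"
    then have "card ?A \<le> card ?T" using card_inj_on_le[OF _ sub] by simp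
    then have "(2::nat) ^ card B \<le> 2 ^ card C" using cA cT by simp
    then show False using card B(4) by simp
  qed
  then obtain g1 g2 where g: "g1 \<in> ?A" "g2 \<in> ?A" "g1 \<noteq> g2" "\<Phi> g1 = \<Phi> g2"
    unfolding inj_on_def by blast
  obtain v where v: "v \<in> B" "g1 v \<noteq> g2 v"
    using g(1-3) by (metis PiE_ext)
  define u where "u = (\<Sum>v\<in>B. (g1 v + g2 v) *s v)"
  have u_eq: "u = ?x g1 + ?x g2"
    unfolding u_def by (simp add: vec.scale_left_distrib sum.distrib)
  have "u \<in> vec.span B" unfolding u_def
    by (intro vec.span_sum vec.span_scale vec.span_base)
  then have uW: "u \<in> W" using vec.span_minimal[OF B(1) W] by blast
  have u0: "u \<noteq> 0"
  proof
    assume u0: "u = 0"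
    have nz: "g1 v + g2 v \<noteq> 0" using v(2) by (cases "g1 v"; cases "g2 v") simp_all
    have "vec.dependent B"
      unfolding vec.dependent_explicit
      apply (rule exI[of _ B])
      apply (rule exI[of _ "\<lambda>v. g1 v + g2 v"])
      using finB v(1) nz u0 unfolding u_def by blast
    with B(2) show False by simp
  qed
  have "dotp u c = 0" if c: "c \<in> C" for c
  proof -
    have "\<Phi> g1 c = \<Phi> g2 c" using g(4) by simp
    then have "dotp (?x g1) c = dotp (?x g2) c" using c unfolding \<Phi>_def by simp
    then show ?thesis unfolding u_eq dotp_add_left by simp
  qed
  with uW u0 show ?thesis by blast
qed

lemma degree_sum_zero:
  fixes W :: "(bit^'m) set" and C :: "(bit^'m) set"
  assumes W: "vec.subspace W" and card: "card C < vec.dim W"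
  shows "(\<Sum>b\<in>W. \<Prod>c\<in>C. dotp b c) = 0"
proof -
  obtain u where u: "u \<in> W" "u \<noteq> 0" "\<And>c. c \<in> C \<Longrightarrow> dotp u c = 0"
    using exists_orth[OF W card] by blast
  show ?thesis
  proof (rule invol_sum_zero[where g = "\<lambda>b. b + u"])
    fix b assume b: "b \<in> W"
    show "b + u \<in> W" using vec.subspace_add[OF W b u(1)] .
    show "b + u + u = b" by (rule vec_add_cancel)
    show "b + u \<noteq> b" using u(2) by (metis add_diff_cancel_left' diff_self)
    show "(\<Prod>c\<in>C. dotp (b + u) c) = (\<Prod>c\<in>C. dotp b c)"
      by (intro prod.cong refl) (simp add: dotp_add_left u(3))
  qed simp
qed

lemma prod_bit_iff: "finite A \<Longrightarrow> (\<Prod>a\<in>A. g a :: bit) = (if \<forall>a\<in>A. g a = 1 then 1 else 0)"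
  by (induction A rule: finite_induct) auto

lemma prod_bit_image: "finite A \<Longrightarrow> (\<Prod>a\<in>A. h (\<phi> a) :: bit) = (\<Prod>c\<in>\<phi> ` A. h c)"
  by (simp add: prod_bit_iff)

lemma of_nat_bit: "of_nat k = (if even k then (0::bit) else 1)"
  by (induction k) auto

lemma parity_arith:
  assumes "even (w::nat)" "even k" "0 < d" "d = w - k" "r = d - 1"
  shows "odd r"
proof -
  obtain a where a: "w = 2*a" using assms(1) by (auto elim: evenE)
  obtain b where b: "k = 2*b" using assms(2) by (auto elim: evenE)
  have "r = 2*(a - b - 1) + 1" using assms(3-5) a b by simp
  then show ?thesis by simp
qed

definition Dm :: "(bit^'n \<Rightarrow> bit^'m) \<Rightarrow> 'n \<Rightarrow> 'n \<Rightarrow> bit^'m" where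
  "Dm F i j = F (axis i 1 + axis j 1) + F (axis i 1) + F (axis j 1) + F 0"

lemma Dm_sym: "Dm F i j = Dm F j i"
  unfolding Dm_def by (simp add: add.commute add.left_commute)

lemma bit4: "(b::bit) + a + a + b = 0" by (cases a; cases b) simp_all
lemma vec4: "(b::bit^'m) + a + a + b = 0" by (simp add: vec_eq_iff bit4)

lemma Dm_diag: "Dm F i i = 0"
  unfolding Dm_def vec_add_self by (rule vec4)

lemma polar_component: "polar (component F b) $ i $ j = dotp b (Dm F i j)"
  unfolding polar_def Dm_def component_def by (simp add: dotp_add_right)

lemma bent_iff_det:
  assumes ev: "even CARD('n)" and q: "quadratic_fun (F :: bit^'n \<Rightarrow> bit^'m)"
  shows "bent_component F b \<longleftrightarrow> det (polar (component F b)) \<noteq> 0"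
proof -
  have qa: "quadratic_plus_affine (component F b)" using q unfolding quadratic_fun_def by blast
  show ?thesis
    unfolding bent_component_def walsh_def det_ker
    by (rule bent_iff_ker[OF quad_polar[OF qa] ev])
qed

lemma sum_det_zero:
  fixes F :: "bit^'n \<Rightarrow> bit^'m" and W :: "(bit^'m) set"
  assumes W: "vec.subspace W" and dim: "vec.dim W \<ge> CARD('n) div 2 + 1"
  shows "(\<Sum>b\<in>W. det (polar (component F b))) = 0"
proof -
  let ?I = "{p. p permutes (UNIV::'n set) \<and> inv p = p}"
  have "(\<Sum>b\<in>W. det (polar (component F b))) = (\<Sum>b\<in>W. \<Sum>p\<in>?I. \<Prod>i\<in>UNIV. dotp b (Dm F i (p i)))"
  proof (rule sum.cong[OF refl])
    fix b
    have "det (polar (component F b)) = (\<Sum>p\<in>?I. \<Prod>i\<in>UNIV. polar (component F b) $ i $ p i)"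
      by (rule det_invol) (simp add: polar_component Dm_sym)
    then show "det (polar (component F b)) = (\<Sum>p\<in>?I. \<Prod>i\<in>UNIV. dotp b (Dm F i (p i)))"
      by (simp add: polar_component)
  qed
  also have "\<dots> = (\<Sum>p\<in>?I. \<Sum>b\<in>W. \<Prod>i\<in>UNIV. dotp b (Dm F i (p i)))"
    by (rule sum.swap)
  also have "\<dots> = 0"
  proof (rule sum.neutral, rule ballI)
    fix p assume "p \<in> ?I"
    then have pp: "p permutes UNIV" "inv p = p" by auto
    have pp2: "p (p i) = i" for i using permutes_inverses(1)[OF pp(1), of i] pp(2) by simp
    show "(\<Sum>b\<in>W. \<Prod>i\<in>UNIV. dotp b (Dm F i (p i))) = 0"
    proof (cases "\<exists>i. p i = i")
      case True
      then obtain i where "p i = i" by blast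
      then have z: "dotp b (Dm F i (p i)) = 0" for b by (simp add: Dm_diag)
      have P0: "(\<Prod>i\<in>UNIV. dotp b (Dm F i (p i))) = 0" for b
        by (rule prod_zero) (use z in auto)
      show ?thesis by (simp only: P0 sum.neutral_const)
    next
      case False
      let ?\<phi> = "\<lambda>i. Dm F i (p i)"
      have "2 * card (?\<phi> ` UNIV) \<le> card (UNIV :: 'n set)"
        by (rule invol_card_image[where g = p]) (use False pp2 Dm_sym in auto)
      then have "card (?\<phi> ` UNIV) < vec.dim W" using dim by linarith
      then have "(\<Sum>b\<in>W. \<Prod>c\<in>?\<phi> ` UNIV. dotp b c) = 0"
        by (rule degree_sum_zero[OF W])
      then show ?thesis
        by (simp add: prod_bit_image[of UNIV "\<lambda>c. dotp _ c" ?\<phi>, symmetric])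
    qed
  qed
  finally show ?thesis .
qed

theorem mainTheorem12:
  fixes F :: "bit ^ 'n \<Rightarrow> bit ^ 'm" and W :: "(bit ^ 'm) set"
  assumes "even CARD('n)"
    and "quadratic_fun F"
    and "vec.subspace W"
    and "vec.dim W \<ge> CARD('n) div 2 + 1"
  shows "odd (card (W \<inter> nonbent_set F))"
proof -
  let ?Bt = "W \<inter> {b. bent_component F b}"
  have detv: "det (polar (component F b)) = of_bool (bent_component F b)" for b
    using bent_iff_det[OF assms(1,2), of b] by auto
  have "of_nat (card ?Bt) = (0::bit)"
    using sum_det_zero[OF assms(3,4), of F] by (simp add: detv)
  then have evB: "even (card ?Bt)" by (simp add: of_nat_bit split: if_splits)
  have "(\<Sum>b\<in>W. \<Prod>c\<in>{}. dotp b c) = (0::bit)"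
    by (rule degree_sum_zero[OF assms(3)]) (use assms(4) in simp)
  then have "of_nat (card W) = (0::bit)" by simp
  then have evW: "even (card W)" by (simp add: of_nat_bit split: if_splits)
  have W0: "0 \<in> W" using vec.subspace_0[OF assms(3)] .
  have nb0: "\<not> bent_component F 0"
  proof
    assume "bent_component F 0"
    then have "det (polar (component F (0::bit^'m))) \<noteq> 0" using bent_iff_det[OF assms(1,2)] by blast
    then have K: "\<forall>z. polar (component F (0::bit^'m)) *v z = 0 \<longrightarrow> z = 0" using det_ker by blast
    have "polar (component F (0::bit^'m)) *v axis undefined 1 = 0"
      by (simp add: vec_eq_iff matrix_vector_mult_def polar_component)
    with K have "axis (undefined::'n) (1::bit) = 0" by blast
    then have "axis (undefined::'n) (1::bit) $ undefined = 0" by simp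
    then show False by (simp add: axis_def)
  qed
  have eqN: "W \<inter> nonbent_set F = (W - ?Bt) - {0}"
    unfolding nonbent_set_def by auto
  have c1: "card (W - ?Bt) = card W - card ?Bt" by (rule card_Diff_subset) auto
  have "0 \<in> W - ?Bt" using W0 nb0 by simp
  then have c2: "card (W \<inter> nonbent_set F) = card (W - ?Bt) - 1"
    unfolding eqN by (simp add: card_Diff_singleton)
  have "card (W - ?Bt) > 0" using \<open>0 \<in> W - ?Bt\<close> by (auto simp: card_gt_0_iff)
  moreover have "card ?Bt \<le> card W" by (rule card_mono) auto
  ultimately show ?thesis using parity_arith[OF evW evB _ c1 c2] by simp
qed
end
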